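(* Let $p\ge1$ and $N\ge1$, and assume $\beta_1^2>2(\beta_0-\lambda_1)$. Set $\mu_{as}:=\frac p2\beta_1^2+p(\lambda_1-\beta_0)$. Then there exists $\tau_0>0$ such that, for every fixed $\tau\in(0,\tau_0)$, there is a finite random variable $\xi$ with \[ \|Y_n\|^p\le\xi\,e^{-\frac{\mu_{as}}{4}t_n}\qquad\text{for all }n\in\mathbb N,\ \text{a.s.} \] Here the scheme is: $t_n=n\tau$, $\Delta W_n=W(t_{n+1})-W(t_n)$, and $Y_n=(Y_n^1,\dots,Y_n^N)^\top\in\mathbb R^N$ is defined, for $k=1,\dots,N$ and assuming $1+\tau(\lambda_k-\beta_0)\neq0$, by \[ Y_{n+1}^k=\frac{Y_n^k(1+\beta_1\Delta W_n)}{1+\tau(\lambda_k-\beta_0)},\qquad Y_0^k=y_0^k. \] In matrix form this is $Y_{n+1}=(I_N+\tau(\Lambda_N-\beta_0I_N))^{-1}(Y_n+\beta_1Y_n\Delta W_n)$ with $\Lambda_N=\operatorname{diag}(\lambda_1,\dots,\lambda_N)$. The norm is $\|Y_n\|^p=\big(\sum_{k=1}^N|Y_n^k|^2\big)^{p/2}$.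
   Context: $W$ is a one-dimensional standard Brownian motion on a complete filtered probability space $(\Omega,\mathcal F,\{\mathcal F_t\},\mathbb P)$, with the natural augmented filtration. $H$ is a Hilbert space. $A$ is a linear, self-adjoint, positive-definite operator on $H$ with compact resolvent. Its eigenpairs $(\lambda_k,\phi_k)$ satisfy $0<\lambda_1\le\lambda_2\le\cdots\to\infty$, and $\{\phi_k\}$ is an orthonormal basis. $\beta_0,\beta_1\in\mathbb R$. The initial datum $y_0\in L^p_{\mathcal F_0}(\Omega;H)$ is an $\mathcal F_0$-measurable $H$-valued random variable with finite $p$-th moment, and $y_0^k=\langle y_0,\phi_k\rangle_H$. The scheme is the implicit Euler–Maruyama discretization of the $N$-mode spectral Galerkin truncation $dY_N=-(\Lambda_N-\beta_0I_N)Y_N\,dt+\beta_1Y_N\,dW$ of $dy+Ay\,dt=\beta_0y\,dt+\beta_1y\,dW$. *)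

theory Defs
  imports "HOL-Probability.Probability"
begin

definition is_filtration :: "'a measure \<Rightarrow> (real \<Rightarrow> 'a measure) \<Rightarrow> bool" where
  "is_filtration M F \<longleftrightarrow>
     (\<forall>t. subalgebra M (F t)) \<and> (\<forall>s t. s \<le> t \<longrightarrow> sets (F s) \<subseteq> sets (F t))"

definition is_brownian_motion ::
  "'a measure \<Rightarrow> (real \<Rightarrow> 'a measure) \<Rightarrow> (real \<Rightarrow> 'a \<Rightarrow> real) \<Rightarrow> bool" where
  "is_brownian_motion M F W \<longleftrightarrow>
     is_filtration M F \<and>
     (\<forall>t\<ge>0. W t \<in> borel_measurable (F t)) \<and>
     (AE \<omega> in M. W 0 \<omega> = 0) \<and>
     (AE \<omega> in M. continuous_on {0..} (\<lambda>t. W t \<omega>)) \<and>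
     (\<forall>s t. 0 \<le> s \<and> s < t \<longrightarrow>
        prob_space.indep_set M (sets (F s))
          (sets (vimage_algebra (space M) (\<lambda>\<omega>. W t \<omega> - W s \<omega>) borel)) \<and>
        distributed M lborel (\<lambda>\<omega>. W t \<omega> - W s \<omega>) (normal_density 0 (sqrt (t - s))))"

definition self_adjoint_op :: "'h::{real_inner,complete_space} set \<Rightarrow> ('h \<Rightarrow> 'h) \<Rightarrow> bool" where
  "self_adjoint_op D A \<longleftrightarrow>
     subspace D \<and> closure D = UNIV \<and>
     (\<forall>x\<in>D. \<forall>y\<in>D. \<forall>a b. A (a *\<^sub>R x + b *\<^sub>R y) = a *\<^sub>R A x + b *\<^sub>R A y) \<and>
     (\<forall>x\<in>D. \<forall>y\<in>D. inner (A x) y = inner x (A y)) \<and>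
     (\<forall>y z. (\<forall>x\<in>D. inner (A x) y = inner x z) \<longrightarrow> y \<in> D \<and> A y = z)"

text \<open>Modes are indexed 0-based: mode k (k < N) corresponds to the paper's mode k+1.
  Y n \<omega> k is the k-th component of Y_n at \<omega>.\<close>
primrec em_scheme ::
  "(nat \<Rightarrow> real) \<Rightarrow> real \<Rightarrow> real \<Rightarrow> real \<Rightarrow> (real \<Rightarrow> 'a \<Rightarrow> real) \<Rightarrow> ('a \<Rightarrow> nat \<Rightarrow> real)
     \<Rightarrow> nat \<Rightarrow> 'a \<Rightarrow> nat \<Rightarrow> real" where
  "em_scheme lam \<beta>0 \<beta>1 \<tau> W Y0 0 \<omega> k = Y0 \<omega> k"
| "em_scheme lam \<beta>0 \<beta>1 \<tau> W Y0 (Suc n) \<omega> k =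
     em_scheme lam \<beta>0 \<beta>1 \<tau> W Y0 n \<omega> k
       * (1 + \<beta>1 * (W (real (Suc n) * \<tau>) \<omega> - W (real n * \<tau>) \<omega>))
       / (1 + \<tau> * (lam k - \<beta>0))"

end

theory Submission
  imports Defs
begin
lemma d_powr:
  fixes x r :: real assumes "0 < 1 + x"
  shows "((\<lambda>x. (1+x) powr r) has_real_derivative r * (1+x) powr (r-1)) (at x)"
proof -
  have 1: "((\<lambda>z. z powr r) has_real_derivative r * (1+x) powr (r - 1)) (at (1+x))"
    using has_real_derivative_powr[OF assms] .
  have 2: "((\<lambda>x. 1 + x) has_real_derivative 1) (at x)"
    by (auto intro!: derivative_eq_intros)
  from DERIV_chain2[where f="\<lambda>z. z powr r" and g="\<lambda>x. 1 + x", OF 1 2]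
  show ?thesis by simp
qed

lemma t1: fixes q z :: real assumes q: "0 < q" "q \<le> 1/4" and z: "0 \<le> z" "z \<le> q/3"
  shows "(1+z)^2 \<le> 1 + q"
proof -
  have "(1+z)^2 = 1 + 2*z + z*z" by (simp add: power2_eq_square algebra_simps)
  moreover have "z*z \<le> (q/3)*(q/3)" using z by (intro mult_mono) auto
  moreover have "(q/3)*(q/3) \<le> (q/3) * 1" using q by (intro mult_left_mono) auto
  ultimately show ?thesis using q z by linarith
qed

lemma t2: fixes q :: real assumes q: "0 < q" "q \<le> 1/4"
  shows "(1-q) * (1/(1+q)) \<ge> 1 - 2*q"
proof -
  have "(1 - 2*q) * (1+q) \<le> 1 - q" using q by (simp add: algebra_simps)
  then show ?thesis using q by (simp add: field_simps)
qed

lemma H_nonneg: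
  fixes q x :: real
  assumes q: "0 < q" "q \<le> 1/4" and x: "-1 < x" "x \<le> q/3"
  shows "(1+x) powr q \<le> 1 + q*x - q*(1-2*q)/2 * x^2"
proof -
  define c2 where "c2 = q*(1-2*q)"
  define H where "H x = 1 + q*x - c2/2 * x^2 - (1+x) powr q" for x
  define H' where "H' x = q - c2*x - q*(1+x) powr (q-1)" for x
  define H'' where "H'' x = -c2 - q*(q-1)*(1+x) powr (q-1-1)" for x
  have dH: "(H has_real_derivative H' z) (at z)" if "-1 < z" for z
  proof -
    have "((\<lambda>x. 1 + q*x - c2/2 * x^2 - (1+x) powr q) has_real_derivative
        (0 + q*1 - c2/2 * (of_nat 2 * z^(2-1) * 1) - q * (1+z) powr (q-1))) (at z)"
      by (intro DERIV_diff DERIV_add DERIV_cmult DERIV_const DERIV_ident DERIV_power d_powr) (use that in \<open>auto intro!: derivative_eq_intros\<close>)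
    then show ?thesis unfolding H_def H'_def by (simp add: algebra_simps)
  qed
  have dH': "(H' has_real_derivative H'' z) (at z)" if "-1 < z" for z
  proof -
    have "((\<lambda>x. q - c2*x - q*(1+x) powr (q-1)) has_real_derivative
        (0 - c2*1 - q * ((q-1)*(1+z) powr (q-1-1)))) (at z)"
      by (intro DERIV_diff DERIV_add DERIV_cmult DERIV_const DERIV_ident d_powr) (use that in auto)
    then show ?thesis unfolding H'_def H''_def by (simp add: algebra_simps)
  qed
  have H''pos: "H'' z \<ge> 0" if "-1 < z" "z \<le> q/3" for z
  proof -
    have "(1-q) * (1+z) powr (q-2) \<ge> 1 - 2*q"
    proof (cases "z \<le> 0")
      case True
      have "(1+z) powr (q-2) \<ge> (1+z) powr 0"
        by (rule powr_mono') (use True that q in auto)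
      then have "(1+z) powr (q-2) \<ge> 1" using that by simp
      then have "(1-q) * (1+z) powr (q-2) \<ge> (1-q) * 1" using q by (intro mult_left_mono) auto
      then have "(1-q) * (1+z) powr (q-2) \<ge> 1 - q" by simp
      then show ?thesis using q by linarith
    next
      case False
      have "(1+z) powr (q-2) \<ge> (1+z) powr (-2)"
        by (rule powr_mono) (use False that q in auto)
      also have "(1+z) powr (-2) = 1 / (1+z)^2"
        using that by (simp add: powr_minus_divide powr_realpow)
      finally have A: "(1+z) powr (q-2) \<ge> 1 / (1+z)^2" .
      have "(1+z)^2 \<le> 1 + q" using t1[OF q, of z] that False by simp
      then have "1/(1+z)^2 \<ge> 1/(1+q)" using that q False
        by (intro divide_left_mono) auto
      with A have "(1+z) powr (q-2) \<ge> 1/(1+q)" by linarith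
      then have "(1-q) * (1+z) powr (q-2) \<ge> (1-q) * (1/(1+q))"
        using q by (intro mult_left_mono) auto
      moreover have "(1-q) * (1/(1+q)) \<ge> 1 - 2*q" using t2[OF q] .
      ultimately show ?thesis by linarith
    qed
    then have "q * ((1-q) * (1+z) powr (q-2)) \<ge> q * (1 - 2*q)"
      using q by (intro mult_left_mono) auto
    then show ?thesis unfolding H''_def c2_def by (simp add: algebra_simps)
  qed
  have H'0: "H' 0 = 0" unfolding H'_def by simp
  have H0: "H 0 = 0" unfolding H_def by simp
  have "H x \<ge> 0"
  proof (cases "x \<le> 0")
    case True
    have H'neg: "H' z \<le> 0" if "x \<le> z" "z \<le> 0" for z
    proof -
      have "H' z \<le> H' 0"
        by (rule deriv_nonneg_imp_mono[of z 0 H' H'']) (use that x q dH' H''pos in auto)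
      then show ?thesis using H'0 by simp
    qed
    have "H 0 \<le> H x"
      by (rule deriv_nonpos_imp_antimono[of x 0 H H']) (use True x H'neg dH in auto)
    then show ?thesis using H0 by simp
  next
    case False
    have H'pos: "H' z \<ge> 0" if "0 \<le> z" "z \<le> x" for z
    proof -
      have "H' 0 \<le> H' z"
        by (rule deriv_nonneg_imp_mono[of 0 z H' H'']) (use that x q dH' H''pos in auto)
      then show ?thesis using H'0 by simp
    qed
    have "H 0 \<le> H x"
      by (rule deriv_nonneg_imp_mono[of 0 x H H']) (use False x H'pos dH in auto)
    then show ?thesis using H0 by simp
  qed
  then show ?thesis unfolding H_def c2_def by simp
qed

lemma bern:
  fixes q x :: real assumes q: "0 < q" "q \<le> 1" and x: "0 \<le> x"
  shows "(1+x) powr q \<le> 1 + q*x"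
proof -
  define B where "B x = 1 + q*x - (1+x) powr q" for x
  define B' where "B' x = q - q*(1+x) powr (q-1)" for x
  have dB: "(B has_real_derivative B' z) (at z)" if "0 \<le> z" for z
  proof -
    have "((\<lambda>x. 1 + q*x - (1+x) powr q) has_real_derivative
        (0 + q*1 - q * (1+z) powr (q-1))) (at z)"
      by (intro DERIV_diff DERIV_add DERIV_cmult DERIV_const DERIV_ident d_powr) (use that in auto)
    then show ?thesis unfolding B_def B'_def by (simp add: algebra_simps)
  qed
  have B'pos: "B' z \<ge> 0" if "0 \<le> z" for z
  proof -
    have "(1+z) powr (q-1) \<le> (1+z) powr 0"
      by (rule powr_mono) (use that q in auto)
    then have "(1+z) powr (q-1) \<le> 1" using that by simp
    then have "q * (1+z) powr (q-1) \<le> q * 1" using q by (intro mult_left_mono) auto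
    then show ?thesis unfolding B'_def by simp
  qed
  have "B 0 \<le> B x"
    by (rule deriv_nonneg_imp_mono[of 0 x B B']) (use x dB B'pos in auto)
  then show ?thesis unfolding B_def by simp
qed

lemma powr_le_1plus:
  fixes q y :: real assumes q: "0 < q" "q \<le> 1" and y: "0 \<le> y"
  shows "y powr q \<le> 1 + y"
proof (cases "y \<le> 1")
  case True
  then have "y powr q \<le> 1 powr q" using y q by (intro powr_mono2) auto
  then have "y powr q \<le> 1" by simp
  then show ?thesis using y by linarith
next
  case False
  have "y powr q \<le> y powr 1" by (rule powr_mono) (use False q in auto)
  then show ?thesis using False by simp
qed

lemma key_ineq:
  fixes q x :: real assumes q: "0 < q" "q \<le> 1/4"
  shows "\<bar>1+x\<bar> powr q \<le> 1 + q*x - q*(1-2*q)/2 * x^2 + (9*(1-2*q)/(2*q) + 4) * x^4"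
proof -
  define K where "K = 9*(1-2*q)/(2*q) + 4"
  define c where "c = q*(1-2*q)/2"
  have K0: "K \<ge> 4" unfolding K_def using q by (simp add: field_simps)
  have "q*(1-2*q) \<le> q*1" using q by (intro mult_left_mono) auto
  moreover have "0 \<le> q*(1-2*q)" using q by simp
  ultimately have c0: "0 \<le> c" "c \<le> 1" unfolding c_def using q by linarith+
  have "\<bar>1+x\<bar> powr q \<le> 1 + q*x - c * x^2 + K * x^4"
  proof (cases "x \<le> -1")
    case True
    define y where "y = -x"
    have y1: "y \<ge> 1" using True y_def by simp
    have "\<bar>1+x\<bar> powr q \<le> 1 + \<bar>1+x\<bar>" by (rule powr_le_1plus) (use q in auto)
    also have "\<dots> = y" using True y_def by simp
    also have "y \<le> 1 + q*x - c * x^2 + K * x^4"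
    proof -
      have "y^1 \<le> y^4" using y1 by (intro power_increasing) auto
      then have "y \<le> y^4" by simp
      moreover have "y^2 \<le> y^4" using y1 by (intro power_increasing) auto
      moreover have "q*y \<le> 1*y" using q y1 by (intro mult_right_mono) auto
      moreover have "c*y^2 \<le> 1*y^2" using c0 y1 by (intro mult_right_mono) auto
      moreover have "K * y^4 \<ge> 4 * y^4" using K0 by (intro mult_right_mono) auto
      moreover have "0 \<le> y^4" by simp
      ultimately have "y \<le> 1 - q*y - c*y^2 + K*y^4" by linarith
      then show ?thesis unfolding y_def by simp
    qed
    finally show ?thesis .
  next
    case False
    show ?thesis
    proof (cases "x \<le> q/3")
      case True
      have "\<bar>1+x\<bar> powr q = (1+x) powr q" using False by simp
      also have "\<dots> \<le> 1 + q*x - q*(1-2*q)/2 * x^2" by (rule H_nonneg) (use q False True in auto)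
      also have "\<dots> \<le> 1 + q*x - c * x^2 + K * x^4" unfolding c_def using K0 by simp
      finally show ?thesis .
    next
      case xb: False
      have "\<bar>1+x\<bar> powr q = (1+x) powr q" using False by simp
      also have "\<dots> \<le> 1 + q*x" by (rule bern) (use q xb in auto)
      also have "c * x^2 \<le> K * x^4"
      proof -
        have x2: "x^2 \<ge> (q/3)^2" using xb q by (intro power_mono) auto
        have "c = (9*(1-2*q)/(2*q)) * (q/3)^2" unfolding c_def using q by (simp add: field_simps power2_eq_square)
        also have "\<dots> \<le> (9*(1-2*q)/(2*q)) * x^2" using x2 q by (intro mult_left_mono) auto
        also have "\<dots> \<le> K * x^2" unfolding K_def by (intro mult_right_mono) auto
        finally have "c * x^2 \<le> K * x^2 * x^2" by (intro mult_right_mono) auto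
        then show ?thesis by (simp add: power2_eq_square power4_eq_xxxx mult.assoc)
      qed
      then have "1 + q*x \<le> 1 + q*x - c * x^2 + K * x^4" by simp
      finally show ?thesis .
    qed
  qed
  then show ?thesis unfolding K_def c_def .
qed

lemma gauss_poly:
  fixes \<sigma> q c K \<beta> :: real assumes s: "0 < \<sigma>"
  shows "has_bochner_integral lborel
    (\<lambda>w. normal_density 0 \<sigma> w * (1 + q*(\<beta>*w) - c*(\<beta>*w)^2 + K*(\<beta>*w)^4))
    (1 - c*\<beta>^2*\<sigma>^2 + 3*K*\<beta>^4*\<sigma>^4)"
proof -
  let ?nd = "normal_density 0 \<sigma>"
  have i0: "has_bochner_integral lborel (\<lambda>x. ?nd x) 1"
    using normal_moment_even[OF s, where k=0 and \<mu>=0] by simp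
  have i1: "has_bochner_integral lborel (\<lambda>x. ?nd x * x) 0"
    using normal_moment_odd[OF s, where k=0 and \<mu>=0] by simp
  have i2: "has_bochner_integral lborel (\<lambda>x. ?nd x * x^2) (\<sigma>^2)"
    using normal_moment_even[OF s, where k=1 and \<mu>=0] by simp
  have i4: "has_bochner_integral lborel (\<lambda>x. ?nd x * x^4) (3*\<sigma>^4)"
    using normal_moment_even[OF s, where k=2 and \<mu>=0] by (simp add: field_simps fact_numeral power2_eq_square power4_eq_xxxx)
  have "has_bochner_integral lborel
    (\<lambda>x. ?nd x + (q*\<beta>) * (?nd x * x) - (c*\<beta>^2) * (?nd x * x^2) + (K*\<beta>^4) * (?nd x * x^4))
    (1 + (q*\<beta>) * 0 - (c*\<beta>^2) * \<sigma>^2 + (K*\<beta>^4) * (3*\<sigma>^4))"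
    by (intro has_bochner_integral_add has_bochner_integral_diff has_bochner_integral_mult_right i0 i1 i2 i4)
  then show ?thesis
    by (simp add: algebra_simps power_mult_distrib)
qed

lemma indep_set_mono':
  assumes "prob_space.indep_set M A B" "A' \<subseteq> A" "B' \<subseteq> B" "prob_space M"
  shows "prob_space.indep_set M A' B'"
proof -
  interpret prob_space M by fact
  show ?thesis unfolding indep_set_def
    by (rule indep_sets_mono_sets[OF assms(1)[unfolded indep_set_def]]) (use assms(2,3) in \<open>auto split: bool.split\<close>)
qed

theorem proposition8:
  fixes M :: "'a measure" and F :: "real \<Rightarrow> 'a measure" and W :: "real \<Rightarrow> 'a \<Rightarrow> real"
    and D :: "'h::{real_inner,complete_space} set" and A :: "'h \<Rightarrow> 'h"
    and lam :: "nat \<Rightarrow> real" and \<phi> :: "nat \<Rightarrow> 'h"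
    and \<beta>0 \<beta>1 p :: real and N :: nat and y0 :: "'a \<Rightarrow> 'h"
  assumes M: "prob_space M"
    and BM: "is_brownian_motion M F W"
    and A: "self_adjoint_op D A"
    and A_pos: "\<forall>x\<in>D. x \<noteq> 0 \<longrightarrow> inner (A x) x > 0"
    and eig_dom: "\<forall>k. \<phi> k \<in> D"
    and eig: "\<forall>k. A (\<phi> k) = lam k *\<^sub>R \<phi> k"
    and lam_pos: "lam 0 > 0"
    and lam_mono: "mono lam"
    and lam_inf: "filterlim lam at_top sequentially"
    and orthonormal: "\<forall>i j. inner (\<phi> i) (\<phi> j) = (if i = j then 1 else 0)"
    and basis: "closure (span (range \<phi>)) = UNIV"
    and y0_meas: "y0 \<in> borel_measurable (F 0)"
    and y0_moment: "integrable M (\<lambda>\<omega>. norm (y0 \<omega>) powr p)"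
    and p: "p \<ge> 1" and N: "N \<ge> 1"
    and cond: "\<beta>1\<^sup>2 > 2 * (\<beta>0 - lam 0)"
  shows "\<exists>\<tau>0>0. \<forall>\<tau>. 0 < \<tau> \<and> \<tau> < \<tau>0 \<longrightarrow>
           (\<exists>\<xi>. \<xi> \<in> borel_measurable M \<and>
              (AE \<omega> in M. \<forall>n::nat.
                 (\<Sum>k<N. \<bar>em_scheme lam \<beta>0 \<beta>1 \<tau> W (\<lambda>\<omega> k. inner (y0 \<omega>) (\<phi> k)) n \<omega> k\<bar>\<^sup>2)
                   powr (p / 2)
                 \<le> \<xi> \<omega> * exp (- ((p / 2 * \<beta>1\<^sup>2 + p * (lam 0 - \<beta>0)) / 4) * (real n * \<tau>))))"
proof -
  interpret prob_space M by (rule M)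
  define a where "a = lam 0 - \<beta>0"
  define b where "b = \<beta>1^2/2"
  have ab: "a + b > 0" using cond unfolding a_def b_def by simp
  have b0: "b \<ge> 0" unfolding b_def by simp
  have b2: "\<beta>1^2 = 2*b" unfolding b_def by simp
  have b4: "\<beta>1^4 = 4*b^2" unfolding b_def by (simp add: power2_eq_square power4_eq_xxxx)
  define q where "q = min (1/4) ((a+b)/(4*(b+1)))"
  have q0: "0 < q" unfolding q_def using ab b0 by simp
  have q1: "q \<le> 1/4" unfolding q_def by (rule min.cobounded1)
  have "q \<le> (a+b)/(4*(b+1))" unfolding q_def by (rule min.cobounded2)
  then have q2: "q*(4*(b+1)) \<le> a+b" using b0 by (simp add: le_divide_eq)
  have qb: "2*q*b < 3*(a+b)/4" using q2 q0 ab b0 by (simp add: algebra_simps)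
  define c where "c = q*(1-2*q)/2"
  define K where "K = 9*(1-2*q)/(2*q) + 4"
  have K0: "K \<ge> 0" unfolding K_def using q0 q1 by simp
  define \<gamma> where "\<gamma> = q*(3*(a+b)/4 - 2*q*b)"
  have \<gamma>0: "\<gamma> > 0" unfolding \<gamma>_def using q0 qb by simp
  define L where "L = 12*K*b^2 + 2*q*a^2 + 1"
  have L0: "L > 0" unfolding L_def using K0 q0 by (simp add: add_nonneg_pos)
  define \<tau>0 where "\<tau>0 = min (1/(2*\<bar>a\<bar>+2)) (\<gamma>/L)"
  have \<tau>00: "\<tau>0 > 0" unfolding \<tau>0_def using \<gamma>0 L0 by simp
  have BMd: "is_filtration M F \<and>
     (\<forall>t\<ge>0. W t \<in> borel_measurable (F t)) \<and>
     (\<forall>s t. 0 \<le> s \<and> s < t \<longrightarrow>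
        indep_set (sets (F s))
          (sets (vimage_algebra (space M) (\<lambda>\<omega>. W t \<omega> - W s \<omega>) borel)) \<and>
        distributed M lborel (\<lambda>\<omega>. W t \<omega> - W s \<omega>) (normal_density 0 (sqrt (t - s))))"
    using BM unfolding is_brownian_motion_def by blast
  have sub: "\<And>t. subalgebra M (F t)" and filt: "\<And>s t. s \<le> t \<Longrightarrow> sets (F s) \<subseteq> sets (F t)"
    using BMd unfolding is_filtration_def by auto
  have Wad: "\<And>t. t \<ge> 0 \<Longrightarrow> W t \<in> borel_measurable (F t)" using BMd by auto
  have inc: "\<And>s t. 0 \<le> s \<Longrightarrow> s < t \<Longrightarrow> indep_set (sets (F s))
          (sets (vimage_algebra (space M) (\<lambda>\<omega>. W t \<omega> - W s \<omega>) borel)) \<and>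
        distributed M lborel (\<lambda>\<omega>. W t \<omega> - W s \<omega>) (normal_density 0 (sqrt (t - s)))"
    using BMd by blast
  have spF: "\<And>t. space (F t) = space M" using sub unfolding subalgebra_def by auto
  have Wm: "W t \<in> borel_measurable (F s)" if "0 \<le> t" "t \<le> s" for t s
  proof -
    have "subalgebra (F s) (F t)" using sub[of s] sub[of t] filt[of t s] that unfolding subalgebra_def by auto
    from measurable_from_subalg[OF this Wad] that show ?thesis by simp
  qed
  have WM: "W t \<in> borel_measurable M" if "0 \<le> t" for t
    using measurable_from_subalg[OF sub Wad[OF that]] .
  define Y0 where "Y0 = (\<lambda>\<omega> k. inner (y0 \<omega>) (\<phi> k))"
  have y0M: "y0 \<in> borel_measurable M" using measurable_from_subalg[OF sub y0_meas] .
  have Y0M: "(\<lambda>\<omega>. Y0 \<omega> k) \<in> borel_measurable M" for k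
    unfolding Y0_def
    by (rule borel_measurable_continuous_on[OF _ y0M]) (intro continuous_intros)
  show ?thesis
  proof (intro exI[of _ \<tau>0] conjI allI impI)
    show "\<tau>0 > 0" by (rule \<tau>00)
    fix \<tau> :: real assume \<tau>: "0 < \<tau> \<and> \<tau> < \<tau>0"
    then have \<tau>pos: "0 < \<tau>" by simp
    have "\<tau> < 1/(2*\<bar>a\<bar>+2)" using \<tau> unfolding \<tau>0_def by simp
    then have "\<tau>*(2*\<bar>a\<bar>+2) < 1" by (simp add: less_divide_eq)
    then have \<tau>a: "\<tau>*\<bar>a\<bar> \<le> 1/2" using \<tau>pos by (simp add: algebra_simps)
    have "\<tau> < \<gamma>/L" using \<tau> unfolding \<tau>0_def by simp
    then have \<tau>L: "\<tau>*L < \<gamma>" using L0 by (simp add: less_divide_eq)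
    define d0 where "d0 = 1 + \<tau>*a"
    have "\<bar>\<tau>*a\<bar> \<le> 1/2" using \<tau>a \<tau>pos by (simp add: abs_mult)
    then have d0: "d0 > 0" unfolding d0_def by linarith
    define e where "e = exp (-(a+b)*\<tau>/4)"
    define \<rho> where "\<rho> = d0 * e"
    have \<rho>0: "\<rho> > 0" unfolding \<rho>_def e_def using d0 by simp
    define r where "r = \<rho> powr q"
    have r0: "r > 0" unfolding r_def using \<rho>0 by simp
    define dW where "dW j \<omega> = W (real (Suc j) * \<tau>) \<omega> - W (real j * \<tau>) \<omega>" for j \<omega>
    define g where "g w = \<bar>1 + \<beta>1*w\<bar> powr q" for w
    define nd where "nd = normal_density 0 (sqrt \<tau>)"
    define m where "m = (\<integral>w. nd w * g w \<partial>lborel)"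
    have gM[measurable]: "g \<in> borel_measurable borel" unfolding g_def by measurable
    have g0: "g w \<ge> 0" for w unfolding g_def by simp
    have gML: "g \<in> borel_measurable lborel" using gM by simp
    have dWeq: "dW j = (\<lambda>\<omega>. W (real (Suc j) * \<tau>) \<omega> - W (real j * \<tau>) \<omega>)" for j
      by (simp add: dW_def fun_eq_iff)
    have dtau: "real (Suc j) * \<tau> - real j * \<tau> = \<tau>" for j by (simp add: algebra_simps)
    have dW_dist: "distributed M lborel (dW j) nd" for j
      using inc[of "real j * \<tau>" "real (Suc j) * \<tau>"] \<tau>pos unfolding dWeq nd_def dtau by simp
    have dW_ind: "indep_set (sets (F (real j * \<tau>))) (sets (vimage_algebra (space M) (dW j) borel))" for j
      using inc[of "real j * \<tau>" "real (Suc j) * \<tau>"] \<tau>pos unfolding dWeq by simp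
    have dWF: "dW j \<in> borel_measurable (F s)" if "real (Suc j) * \<tau> \<le> s" for j s
      unfolding dWeq
      by (intro borel_measurable_diff Wm) (use that \<tau>pos in \<open>auto intro: order_trans[rotated] simp: mult_right_mono\<close>)
    have dWM[measurable]: "dW j \<in> borel_measurable M" for j
      unfolding dWeq using WM \<tau>pos by (intro borel_measurable_diff WM) auto
    define Pl where "Pl w = 1 + q*(\<beta>1*w) - c*(\<beta>1*w)^2 + K*(\<beta>1*w)^4" for w
    have gP: "g w \<le> Pl w" for w
      using key_ineq[OF q0 q1, of "\<beta>1*w"] unfolding g_def Pl_def c_def K_def by simp
    have hP: "has_bochner_integral lborel (\<lambda>w. nd w * Pl w) (1 - c*\<beta>1^2*\<tau> + 3*K*\<beta>1^4*\<tau>^2)"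
    proof -
      have ss: "sqrt \<tau> * sqrt \<tau> = \<tau>" using \<tau>pos by simp
      have "(sqrt \<tau>)^2 = \<tau>" "(sqrt \<tau>)^4 = \<tau>^2" using \<tau>pos by (simp_all add: power4_eq_xxxx power2_eq_square ss)
      then show ?thesis
        using gauss_poly[where \<sigma>="sqrt \<tau>" and q=q and c=c and K=K and \<beta>=\<beta>1] \<tau>pos unfolding nd_def Pl_def
        by simp
    qed
    have int_g: "integrable lborel (\<lambda>w. nd w * g w)"
    proof (rule Bochner_Integration.integrable_bound[where f="\<lambda>w. nd w * Pl w"])
      show "integrable lborel (\<lambda>w. nd w * Pl w)" using hP by (rule integrable.intros)
      show "(\<lambda>w. nd w * g w) \<in> borel_measurable lborel" unfolding nd_def by measurable
      show "AE x in lborel. norm (nd x * g x) \<le> norm (nd x * Pl x)"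
      proof (intro AE_I2)
        fix x
        have "nd x \<ge> 0" unfolding nd_def by simp
        moreover have "0 \<le> g x" "g x \<le> Pl x" using g0 gP by auto
        ultimately show "norm (nd x * g x) \<le> norm (nd x * Pl x)"
          by (simp add: abs_mult mult_left_mono)
      qed
    qed
    have m_le: "m \<le> 1 - c*\<beta>1^2*\<tau> + 3*K*\<beta>1^4*\<tau>^2"
    proof -
      have "m \<le> (\<integral>w. nd w * Pl w \<partial>lborel)" unfolding m_def
        by (intro integral_mono int_g integrable.intros[OF hP] mult_left_mono gP)
           (simp add: nd_def)
      also have "\<dots> = 1 - c*\<beta>1^2*\<tau> + 3*K*\<beta>1^4*\<tau>^2" using hP by (rule has_bochner_integral_integral_eq)
      finally show ?thesis .
    qed
    have m0: "m \<ge> 0" unfolding m_def by (intro integral_nonneg_AE AE_I2) (simp add: nd_def g0)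
    have m_r: "m < r"
    proof -
      have lnd: "ln d0 \<ge> \<tau>*a - 2*(\<tau>*a)^2"
      proof (cases "a \<ge> 0")
        case True
        have "\<tau>*a \<le> 1" using \<tau>a True by simp
        then have "\<tau>*a - (\<tau>*a)^2 \<le> ln (1 + \<tau>*a)" using True \<tau>pos
          by (intro ln_one_plus_pos_lower_bound) auto
        moreover have "(\<tau>*a)^2 \<ge> 0" by simp
        ultimately show ?thesis unfolding d0_def by linarith
      next
        case False
        have "-(-(\<tau>*a)) - 2*(-(\<tau>*a))^2 \<le> ln (1 - (-(\<tau>*a)))"
          using False \<tau>pos \<tau>a by (intro ln_one_minus_pos_lower_bound) (auto simp: mult_nonneg_nonpos abs_if)
        then show ?thesis unfolding d0_def by simp
      qed
      have "r = exp (q * ln \<rho>)" unfolding r_def powr_def using \<rho>0 by simp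
      also have "ln \<rho> = ln d0 - (a+b)*\<tau>/4" unfolding \<rho>_def e_def using d0 by (simp add: ln_mult field_simps)
      finally have "r = exp (q * (ln d0 - (a+b)*\<tau>/4))" .
      moreover have "exp (q * (ln d0 - (a+b)*\<tau>/4)) \<ge> 1 + q * (ln d0 - (a+b)*\<tau>/4)" by simp
      moreover have "q * (ln d0 - (a+b)*\<tau>/4) \<ge> q * (\<tau>*a - 2*(\<tau>*a)^2 - (a+b)*\<tau>/4)"
        using lnd q0 by (intro mult_left_mono) auto
      ultimately have rge: "r \<ge> 1 + q * (\<tau>*a - 2*(\<tau>*a)^2 - (a+b)*\<tau>/4)" by linarith
      have eq: "(1 + q * (\<tau>*a - 2*(\<tau>*a)^2 - (a+b)*\<tau>/4)) - (1 - c*\<beta>1^2*\<tau> + 3*K*\<beta>1^4*\<tau>^2)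
          = \<tau>*\<gamma> - \<tau>*(\<tau>*(L - 1))"
        unfolding \<gamma>_def c_def L_def b2 b4 by (simp add: field_simps power2_eq_square)
      have "\<tau>*(L-1) < \<gamma>" using \<tau>L \<tau>pos by (simp add: right_diff_distrib)
      then have "\<tau>*(\<tau>*(L - 1)) < \<tau>*\<gamma>" using \<tau>pos by (intro mult_strict_left_mono) auto
      then show ?thesis using eq rge m_le by linarith
    qed
    have Eg: "integrable M (\<lambda>\<omega>. g (dW j \<omega>)) \<and> (\<integral>\<omega>. g (dW j \<omega>) \<partial>M) = m" for j
    proof -
      have "(\<integral>x. nd x * g x \<partial>lborel) = (\<integral>\<omega>. g (dW j \<omega>) \<partial>M)"
        by (rule distributed_integral[OF dW_dist gML]) (simp add: nd_def)
      moreover have "integrable M (\<lambda>\<omega>. g (dW j \<omega>))"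
        using distributed_integrable[OF dW_dist gML] int_g by (simp add: nd_def)
      ultimately show ?thesis unfolding m_def by simp
    qed
    define P where "P n \<omega> = (\<Prod>j<n. \<bar>1 + \<beta>1 * dW j \<omega>\<bar>) powr q" for n \<omega>
    have PF: "P n \<in> borel_measurable (F (real n * \<tau>))" for n
    proof -
      have "(\<lambda>\<omega>. \<Prod>j<n. \<bar>1 + \<beta>1 * dW j \<omega>\<bar>) \<in> borel_measurable (F (real n * \<tau>))"
      proof (intro borel_measurable_prod borel_measurable_abs borel_measurable_add borel_measurable_times borel_measurable_const)
        fix j assume "j \<in> {..<n}"
        then have "real (Suc j) * \<tau> \<le> real n * \<tau>" using \<tau>pos by (intro mult_right_mono) auto
        then show "dW j \<in> borel_measurable (F (real n * \<tau>))" by (rule dWF)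
      qed
      then show ?thesis unfolding P_def by measurable
    qed
    have PM[measurable]: "P n \<in> borel_measurable M" for n
      using measurable_from_subalg[OF sub PF] .
    have P0: "P n \<omega> \<ge> 0" for n \<omega> unfolding P_def by simp
    have P_Suc: "P (Suc n) \<omega> = P n \<omega> * g (dW n \<omega>)" for n \<omega>
      unfolding P_def g_def by (simp add: powr_mult prod_nonneg)
    have EP: "integrable M (P n) \<and> (\<integral>\<omega>. P n \<omega> \<partial>M) = m^n" for n
    proof (induction n)
      case 0
      then show ?case unfolding P_def by (simp add: prob_space)
    next
      case (Suc n)
      have iv: "indep_var borel (P n) borel (\<lambda>\<omega>. g (dW n \<omega>))"
        unfolding indep_var_eq
      proof (intro conjI)
        show "random_variable borel (P n)" by simp
        show "random_variable borel (\<lambda>\<omega>. g (dW n \<omega>))" by measurable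
        have s1: "sigma_sets (space M) {P n -` A \<inter> space M |A. A \<in> sets borel} \<subseteq> sets (F (real n * \<tau>))"
          using sets.sigma_sets_subset[of "{P n -` A \<inter> space M |A. A \<in> sets borel}" "F (real n * \<tau>)"]
            measurable_sets[OF PF] spF by auto
        have s2: "sigma_sets (space M) {(\<lambda>\<omega>. g (dW n \<omega>)) -` A \<inter> space M |A. A \<in> sets borel}
            \<subseteq> sets (vimage_algebra (space M) (dW n) borel)"
        proof -
          have "{(\<lambda>\<omega>. g (dW n \<omega>)) -` A \<inter> space M |A. A \<in> sets borel} \<subseteq> sets (vimage_algebra (space M) (dW n) borel)"
          proof
            fix X assume "X \<in> {(\<lambda>\<omega>. g (dW n \<omega>)) -` A \<inter> space M |A. A \<in> sets borel}"
            then obtain A where A: "A \<in> sets borel" and X: "X = (\<lambda>\<omega>. g (dW n \<omega>)) -` A \<inter> space M" by auto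
            have "X = dW n -` (g -` A) \<inter> space M" using X by auto
            moreover have "g -` A \<in> sets borel" using measurable_sets_borel[OF gM A] .
            ultimately show "X \<in> sets (vimage_algebra (space M) (dW n) borel)"
              by (simp add: in_vimage_algebra)
          qed
          then show ?thesis
            using sets.sigma_sets_subset[of _ "vimage_algebra (space M) (dW n) borel"] by simp
        qed
        show "indep_set (sigma_sets (space M) {P n -` A \<inter> space M |A. A \<in> sets borel})
          (sigma_sets (space M) {(\<lambda>\<omega>. g (dW n \<omega>)) -` A \<inter> space M |A. A \<in> sets borel})"
          by (rule indep_set_mono'[OF dW_ind s1 s2 M])
      qed
      have "(\<integral>\<omega>. P n \<omega> * g (dW n \<omega>) \<partial>M) = (\<integral>\<omega>. P n \<omega> \<partial>M) * (\<integral>\<omega>. g (dW n \<omega>) \<partial>M)"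
        by (rule indep_var_lebesgue_integral[OF iv]) (use Suc Eg in auto)
      moreover have "integrable M (\<lambda>\<omega>. P n \<omega> * g (dW n \<omega>))"
        by (rule indep_var_integrable[OF iv]) (use Suc Eg in auto)
      ultimately show ?case using Suc Eg[of n] unfolding P_Suc by simp
    qed
    define Pr where "Pr n \<omega> = (\<Prod>j<n. \<bar>1 + \<beta>1 * dW j \<omega>\<bar>)" for n \<omega>
    have Pr0: "Pr n \<omega> \<ge> 0" for n \<omega> unfolding Pr_def by (simp add: prod_nonneg)
    have PPr: "P n \<omega> = Pr n \<omega> powr q" for n \<omega> unfolding P_def Pr_def ..
    define Ev where "Ev n = {\<omega> \<in> space M. P n \<omega> \<ge> r^n}" for n
    have Ev_sets: "Ev n \<in> sets M" for n unfolding Ev_def by measurable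
    have Ev_prob: "measure M (Ev n) \<le> (m/r)^n" for n
    proof -
      have "measure M (Ev n) \<le> (\<integral>\<omega>. P n \<omega> \<partial>M) / r^n" unfolding Ev_def
        by (rule integral_Markov_inequality_measure[where A="space M"]) (use EP P0 r0 in auto)
      also have "\<dots> = (m/r)^n" using EP by (simp add: power_divide)
      finally show ?thesis .
    qed
    have summ: "summable (\<lambda>n. measure M (Ev n))"
    proof (rule summable_comparison_test'[OF summable_geometric[of "m/r"]])
      show "norm (m/r) < 1" using m0 m_r r0 by simp
      show "norm (measure M (Ev n)) \<le> (m/r)^n" for n using Ev_prob by simp
    qed
    have AEev: "AE \<omega> in M. eventually (\<lambda>n. \<omega> \<in> space M - Ev n) sequentially"
      by (rule borel_cantelli_AE1[OF Ev_sets _ summ]) (simp add: less_top[symmetric])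
    have rn: "(\<rho>^n) powr q = r^n" for n
    proof -
      have "\<rho>^n = \<rho> powr (real n)" using powr_realpow[OF \<rho>0] by simp
      then have "(\<rho>^n) powr q = \<rho> powr (real n * q)" by (simp add: powr_powr)
      moreover have "r^n = \<rho> powr (real n * q)" unfolding r_def using powr_power[of \<rho> q n] \<rho>0 by simp
      ultimately show ?thesis by simp
    qed
    have AEC: "AE \<omega> in M. \<exists>C\<ge>1. \<forall>n. Pr n \<omega> \<le> C * \<rho>^n"
      using AEev AE_space
    proof eventually_elim
      case (elim \<omega>)
      then obtain N0 where N0: "\<forall>n\<ge>N0. \<omega> \<in> space M - Ev n" by (auto simp: eventually_sequentially)
      have small: "Pr n \<omega> \<le> \<rho>^n" if "n \<ge> N0" for n
      proof (rule ccontr)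
        assume "\<not> ?thesis"
        then have "\<rho>^n < Pr n \<omega>" by simp
        then have "(\<rho>^n) powr q < Pr n \<omega> powr q" using q0 \<rho>0 by (intro powr_less_mono2) auto
        then have "r^n < P n \<omega>" using rn PPr by simp
        moreover have "\<omega> \<notin> Ev n" using N0 that by auto
        ultimately show False using elim unfolding Ev_def by auto
      qed
      define C where "C = 1 + (\<Sum>n<N0. Pr n \<omega> / \<rho>^n)"
      have "(\<Sum>n<N0. Pr n \<omega> / \<rho>^n) \<ge> 0" using Pr0 \<rho>0 by (intro sum_nonneg) auto
      then have Cge: "C \<ge> 1" unfolding C_def by linarith
      have "\<forall>n. Pr n \<omega> \<le> C * \<rho>^n"
      proof
        fix n show "Pr n \<omega> \<le> C * \<rho>^n"
        proof (cases "n < N0")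
          case True
          have "Pr n \<omega> / \<rho>^n \<le> (\<Sum>n<N0. Pr n \<omega> / \<rho>^n)"
            by (rule member_le_sum[where f="\<lambda>n. Pr n \<omega> / \<rho>^n"]) (use True Pr0 \<rho>0 in auto)
          then have "Pr n \<omega> / \<rho>^n \<le> C" unfolding C_def by linarith
          then show ?thesis using \<rho>0 by (simp add: divide_le_eq)
        next
          case False
          then have "Pr n \<omega> \<le> \<rho>^n" using small by simp
          also have "\<dots> \<le> C * \<rho>^n" using Cge \<rho>0 by (intro mult_right_mono[of 1 C, simplified]) auto
          finally show ?thesis .
        qed
      qed
      then show ?case using Cge by blast
    qed
    define em where "em = em_scheme lam \<beta>0 \<beta>1 \<tau> W Y0"
    define dk where "dk k = 1 + \<tau>*(lam k - \<beta>0)" for k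
    have dk: "dk k \<ge> d0" for k
    proof -
      have "lam k \<ge> lam 0" using lam_mono by (simp add: monoD)
      then have "\<tau>*(lam k - \<beta>0) \<ge> \<tau>*(lam 0 - \<beta>0)" using \<tau>pos by (intro mult_left_mono) auto
      then show ?thesis unfolding dk_def d0_def a_def by simp
    qed
    have dkpos: "dk k > 0" for k using dk[of k] d0 by simp
    have emf: "em n \<omega> k = Y0 \<omega> k * (\<Prod>j<n. (1 + \<beta>1 * dW j \<omega>)) / dk k ^ n" for n \<omega> k
    proof (induction n)
      case 0 show ?case unfolding em_def by simp
    next
      case (Suc n)
      have "em (Suc n) \<omega> k = em n \<omega> k * (1 + \<beta>1 * dW n \<omega>) / dk k"
        unfolding em_def dk_def dW_def by simp
      then show ?case using Suc dkpos[of k] by (simp add: field_simps)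
    qed
    have embound: "\<bar>em n \<omega> k\<bar> \<le> \<bar>Y0 \<omega> k\<bar> * C * e^n" if C: "\<forall>n. Pr n \<omega> \<le> C*\<rho>^n" "C \<ge> 1" for n \<omega> k C
    proof -
      have "\<bar>em n \<omega> k\<bar> = \<bar>Y0 \<omega> k\<bar> * Pr n \<omega> / dk k ^ n"
        unfolding emf Pr_def using dkpos[of k] by (simp add: abs_mult abs_prod)
      also have "\<dots> \<le> \<bar>Y0 \<omega> k\<bar> * (C*\<rho>^n) / dk k ^n"
        by (intro divide_right_mono mult_left_mono) (use C dkpos[of k] in auto)
      also have "\<dots> \<le> \<bar>Y0 \<omega> k\<bar> * (C*\<rho>^n) / d0^n"
        by (intro divide_left_mono power_mono mult_nonneg_nonneg mult_pos_pos zero_less_power) (use dk d0 \<rho>0 C dkpos[of k] in auto)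
      also have "\<dots> = \<bar>Y0 \<omega> k\<bar> * C * e^n" unfolding \<rho>_def using d0 by (simp add: power_mult_distrib)
      finally show ?thesis .
    qed
    define Xp where "Xp n = exp (- ((p / 2 * \<beta>1\<^sup>2 + p * (lam 0 - \<beta>0)) / 4) * (real n * \<tau>))" for n
    have Xpeq: "Xp n = ((e^n)^2) powr (p/2)" for n
    proof -
      have "(e^n)^2 = exp (2 * (real n * (-(a+b)*\<tau>/4)))" unfolding e_def
        by (simp add: exp_of_nat_mult[symmetric] power_mult[symmetric] mult.assoc)
      then have "((e^n)^2) powr (p/2) = exp (p/2 * (2 * (real n * (-(a+b)*\<tau>/4))))"
        by (simp add: powr_def)
      also have "p/2 * (2 * (real n * (-(a+b)*\<tau>/4))) = - ((p / 2 * \<beta>1\<^sup>2 + p * (lam 0 - \<beta>0)) / 4) * (real n * \<tau>)"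
        unfolding a_def b_def by (simp add: field_simps)
      finally show ?thesis unfolding Xp_def by simp
    qed
    define LHS where "LHS n \<omega> = (\<Sum>k<N. \<bar>em n \<omega> k\<bar>\<^sup>2) powr (p/2)" for n \<omega>
    define S where "S \<omega> = (\<Sum>k<N. (Y0 \<omega> k)^2)" for \<omega>
    have LHSb: "LHS n \<omega> \<le> (S \<omega> * C^2) powr (p/2) * Xp n" if C: "\<forall>n. Pr n \<omega> \<le> C*\<rho>^n" "C \<ge> 1" for n \<omega> C
    proof -
      have "(\<Sum>k<N. \<bar>em n \<omega> k\<bar>\<^sup>2) \<le> (\<Sum>k<N. (\<bar>Y0 \<omega> k\<bar> * C * e^n)^2)"
        by (intro sum_mono power_mono embound[OF C]) auto
      also have "\<dots> = S \<omega> * C^2 * (e^n)^2" unfolding S_def by (simp add: sum_distrib_right power_mult_distrib)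
      finally have "LHS n \<omega> \<le> (S \<omega> * C^2 * (e^n)^2) powr (p/2)" unfolding LHS_def
        by (intro powr_mono2) (use p in \<open>auto intro: sum_nonneg\<close>)
      also have "\<dots> = (S \<omega> * C^2) powr (p/2) * ((e^n)^2) powr (p/2)" by (simp add: powr_mult)
      finally show ?thesis using Xpeq by simp
    qed
    have AEB: "AE \<omega> in M. \<exists>B. \<forall>n. LHS n \<omega> \<le> B * Xp n"
      using AEC by eventually_elim (use LHSb in blast)
    have emM: "(\<lambda>\<omega>. em n \<omega> k) \<in> borel_measurable M" for n k
    proof (induction n)
      case 0 show ?case unfolding em_def using Y0M by simp
    next
      case (Suc n)
      have "(\<lambda>\<omega>. em (Suc n) \<omega> k) = (\<lambda>\<omega>. em n \<omega> k * (1 + \<beta>1 * dW n \<omega>) / (1 + \<tau> * (lam k - \<beta>0)))"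
        unfolding em_def dW_def by simp
      then show ?case using Suc by simp
    qed
    have LHSM[measurable]: "LHS n \<in> borel_measurable M" for n
    proof -
      note emM[measurable]
      show ?thesis unfolding LHS_def by measurable
    qed
    define \<xi> where "\<xi> \<omega> = enn2real (SUP n. ennreal (LHS n \<omega> / Xp n))" for \<omega>
    have \<xi>M: "\<xi> \<in> borel_measurable M" unfolding \<xi>_def by measurable
    have Xppos: "Xp n > 0" for n unfolding Xp_def by simp
    have "AE \<omega> in M. \<forall>n. LHS n \<omega> \<le> \<xi> \<omega> * Xp n"
      using AEB
    proof eventually_elim
      case (elim \<omega>)
      then obtain B where B: "\<forall>n. LHS n \<omega> \<le> B * Xp n" by blast
      have le: "LHS n \<omega> / Xp n \<le> B" for n using B Xppos[of n] by (simp add: divide_le_eq)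
      have "(SUP n. ennreal (LHS n \<omega> / Xp n)) \<le> ennreal B" by (intro SUP_least ennreal_leI le)
      then have fin: "(SUP n. ennreal (LHS n \<omega> / Xp n)) < top" using ennreal_less_top le_less_trans by blast
      show ?case
      proof
        fix n
        have "ennreal (LHS n \<omega> / Xp n) \<le> (SUP n. ennreal (LHS n \<omega> / Xp n))" by (rule SUP_upper) simp
        then have "enn2real (ennreal (LHS n \<omega> / Xp n)) \<le> \<xi> \<omega>" unfolding \<xi>_def by (rule enn2real_mono[OF _ fin])
        moreover have "LHS n \<omega> / Xp n \<ge> 0" unfolding LHS_def using Xppos[of n] by simp
        ultimately have "LHS n \<omega> / Xp n \<le> \<xi> \<omega>" by simp
        then show "LHS n \<omega> \<le> \<xi> \<omega> * Xp n" using Xppos[of n] by (simp add: divide_le_eq)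
      qed
    qed
    with \<xi>M have "\<exists>\<xi>. \<xi> \<in> borel_measurable M \<and> (AE \<omega> in M. \<forall>n. LHS n \<omega> \<le> \<xi> \<omega> * Xp n)" by blast
    then show "\<exists>\<xi>. \<xi> \<in> borel_measurable M \<and> (AE \<omega> in M. \<forall>n::nat. (\<Sum>k<N. \<bar>em_scheme lam \<beta>0 \<beta>1 \<tau> W (\<lambda>\<omega> k. inner (y0 \<omega>) (\<phi> k)) n \<omega> k\<bar>\<^sup>2) powr (p / 2) \<le> \<xi> \<omega> * exp (- ((p / 2 * \<beta>1\<^sup>2 + p * (lam 0 - \<beta>0)) / 4) * (real n * \<tau>)))"
      unfolding LHS_def Xp_def em_def Y0_def .
  qed
qed

end
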